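(* Let $(f^*,g^* )$ be a stationary $\hat\beta$-discounted Nash equilibrium of a two-player discrete time stochastic game for some $\hat\beta\in[0,1)$, and suppose: (C1) $(f^*,g^* )$ is pure, i.e. for each $s\in S$ there are actions $a^1_s\in A^1(s)$, $a^2_s\in A^2(s)$ with $f^*(s,a^1_s)=1$, $g^*(s,a^2_s)=1$; (C2) there exist $p_s\ge0$ ($s\in S$) with $\sum_{s\in S}p_s=1$ such that $P(f^*,g^* )_{ss'}=p_{s'}$ for all $s,s'\in S$ (every row of $P(f^*,g^* )$ equals $(p_1,\dots,p_{|S|})$); (C3) for all $s\in S$ and $a^1\in A^1(s)$: $\sum_{s'\in S}p_{s'}r^1(s',a^1_{s'},a^2_{s'})\ge\sum_{s'\in S}p(s'\mid s,a^1,a^2_s)\,r^1(s',a^1_{s'},a^2_{s'})$, and for all $s\in S$ and $a^2\in A^2(s)$: $\sum_{s'\in S}p_{s'}r^2(s',a^1_{s'},a^2_{s'})\ge\sum_{s'\in S}p(s'\mid s,a^1_s,a^2)\,r^2(s',a^1_{s'},a^2_{s'})$. Then $(f^*,g^* )$ is a Blackwell-Nash equilibrium.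
   Context: A two-player discrete time stochastic game consists of a finite state set $S$, finite nonempty action sets $A^1(s),A^2(s)$ for each $s\in S$, reward functions $r^i(s,a^1,a^2)$ for $i=1,2$, and transition probabilities $p(s'\mid s,a^1,a^2)$. A stationary strategy of player 1 is $f=(f(s))_{s\in S}$ with $f(s)$ a probability distribution on $A^1(s)$, $f(s,a^1)$ denoting the probability of $a^1$; similarly $g$ for player 2. For a stationary pair $(f,g)$ let $r^i(s,f,g)=\sum_{a^1,a^2}f(s,a^1)g(s,a^2)r^i(s,a^1,a^2)$ and $P(f,g)$ the $|S|\times|S|$ matrix with entries $P(f,g)_{ss'}=\sum_{a^1,a^2}f(s,a^1)g(s,a^2)p(s'\mid s,a^1,a^2)$. For $\beta\in[0,1)$ the $\beta$-discounted payoff vector of player $i$ is $v^i_\beta(f,g)=(I-\beta P(f,g))^{-1}r^i(f,g)$, with $s$-th component $v^i_\beta(s,f,g)$. A stationary pair $(f^*,g^* )$ is a $\beta$-discounted Nash equilibrium if for all $s\in S$, $v^1_\beta(s,f^*,g^* )\ge v^1_\beta(s,f,g^* )$ for all stationary $f$ and $v^2_\beta(s,f^*,g^* )\ge v^2_\beta(s,f^*,g)$ for all stationary $g$. A stationary pair is a Blackwell-Nash equilibrium (BNE) if there is $\beta_0\in[0,1)$ such that it is a $\beta$-discounted Nash equilibrium for every $\beta\in[\beta_0,1)$. *)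

theory Defs
  imports "HOL-Analysis.Analysis"
begin

definition stoch_game ::
  "('s::finite \<Rightarrow> 'a set) \<Rightarrow> ('s \<Rightarrow> 'b set) \<Rightarrow> ('s \<Rightarrow> 'a \<Rightarrow> 'b \<Rightarrow> 's \<Rightarrow> real) \<Rightarrow> bool" where
  "stoch_game A1 A2 p \<longleftrightarrow>
     (\<forall>s. finite (A1 s) \<and> A1 s \<noteq> {} \<and> finite (A2 s) \<and> A2 s \<noteq> {}) \<and>
     (\<forall>s a1 a2. a1 \<in> A1 s \<longrightarrow> a2 \<in> A2 s \<longrightarrow>
        (\<forall>s'. 0 \<le> p s a1 a2 s') \<and> (\<Sum>s'\<in>UNIV. p s a1 a2 s') = 1)"

definition stationary :: "('s \<Rightarrow> 'a set) \<Rightarrow> ('s \<Rightarrow> 'a \<Rightarrow> real) \<Rightarrow> bool" where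
  "stationary A f \<longleftrightarrow> (\<forall>s. (\<forall>a\<in>A s. 0 \<le> f s a) \<and> (\<Sum>a\<in>A s. f s a) = 1)"

definition rew_vec ::
  "('s::finite \<Rightarrow> 'a set) \<Rightarrow> ('s \<Rightarrow> 'b set) \<Rightarrow> ('s \<Rightarrow> 'a \<Rightarrow> 'b \<Rightarrow> real)
   \<Rightarrow> ('s \<Rightarrow> 'a \<Rightarrow> real) \<Rightarrow> ('s \<Rightarrow> 'b \<Rightarrow> real) \<Rightarrow> real^'s" where
  "rew_vec A1 A2 r f g = (\<chi> s. \<Sum>a1\<in>A1 s. \<Sum>a2\<in>A2 s. f s a1 * g s a2 * r s a1 a2)"

definition trans_mat ::
  "('s::finite \<Rightarrow> 'a set) \<Rightarrow> ('s \<Rightarrow> 'b set) \<Rightarrow> ('s \<Rightarrow> 'a \<Rightarrow> 'b \<Rightarrow> 's \<Rightarrow> real)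
   \<Rightarrow> ('s \<Rightarrow> 'a \<Rightarrow> real) \<Rightarrow> ('s \<Rightarrow> 'b \<Rightarrow> real) \<Rightarrow> real^'s^'s" where
  "trans_mat A1 A2 p f g = (\<chi> s s'. \<Sum>a1\<in>A1 s. \<Sum>a2\<in>A2 s. f s a1 * g s a2 * p s a1 a2 s')"

definition disc_payoff ::
  "real \<Rightarrow> ('s::finite \<Rightarrow> 'a set) \<Rightarrow> ('s \<Rightarrow> 'b set) \<Rightarrow> ('s \<Rightarrow> 'a \<Rightarrow> 'b \<Rightarrow> 's \<Rightarrow> real)
   \<Rightarrow> ('s \<Rightarrow> 'a \<Rightarrow> 'b \<Rightarrow> real) \<Rightarrow> ('s \<Rightarrow> 'a \<Rightarrow> real) \<Rightarrow> ('s \<Rightarrow> 'b \<Rightarrow> real) \<Rightarrow> real^'s" where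
  "disc_payoff \<beta> A1 A2 p r f g =
     matrix_inv (mat 1 - \<beta> *\<^sub>R trans_mat A1 A2 p f g) *v rew_vec A1 A2 r f g"

definition disc_nash ::
  "real \<Rightarrow> ('s::finite \<Rightarrow> 'a set) \<Rightarrow> ('s \<Rightarrow> 'b set) \<Rightarrow> ('s \<Rightarrow> 'a \<Rightarrow> 'b \<Rightarrow> 's \<Rightarrow> real)
   \<Rightarrow> ('s \<Rightarrow> 'a \<Rightarrow> 'b \<Rightarrow> real) \<Rightarrow> ('s \<Rightarrow> 'a \<Rightarrow> 'b \<Rightarrow> real)
   \<Rightarrow> ('s \<Rightarrow> 'a \<Rightarrow> real) \<Rightarrow> ('s \<Rightarrow> 'b \<Rightarrow> real) \<Rightarrow> bool" where
  "disc_nash \<beta> A1 A2 p r1 r2 f g \<longleftrightarrow>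
     (\<forall>s. (\<forall>f'. stationary A1 f' \<longrightarrow>
              disc_payoff \<beta> A1 A2 p r1 f' g $ s \<le> disc_payoff \<beta> A1 A2 p r1 f g $ s) \<and>
          (\<forall>g'. stationary A2 g' \<longrightarrow>
              disc_payoff \<beta> A1 A2 p r2 f g' $ s \<le> disc_payoff \<beta> A1 A2 p r2 f g $ s))"

definition blackwell_nash ::
  "('s::finite \<Rightarrow> 'a set) \<Rightarrow> ('s \<Rightarrow> 'b set) \<Rightarrow> ('s \<Rightarrow> 'a \<Rightarrow> 'b \<Rightarrow> 's \<Rightarrow> real)
   \<Rightarrow> ('s \<Rightarrow> 'a \<Rightarrow> 'b \<Rightarrow> real) \<Rightarrow> ('s \<Rightarrow> 'a \<Rightarrow> 'b \<Rightarrow> real)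
   \<Rightarrow> ('s \<Rightarrow> 'a \<Rightarrow> real) \<Rightarrow> ('s \<Rightarrow> 'b \<Rightarrow> real) \<Rightarrow> bool" where
  "blackwell_nash A1 A2 p r1 r2 f g \<longleftrightarrow>
     (\<exists>\<beta>0\<in>{0..<1}. \<forall>\<beta>\<in>{\<beta>0..<1}. disc_nash \<beta> A1 A2 p r1 r2 f g)"

end

theory Submission
  imports Defs
begin

definition stochm :: "real^'n^'n \<Rightarrow> bool" where
  "stochm P \<longleftrightarrow> (\<forall>i j. 0 \<le> P$i$j) \<and> (\<forall>i. (\<Sum>j\<in>UNIV. P$i$j) = 1)"

lemma Mv_eq: "((mat 1 - \<beta> *\<^sub>R P) *v y) $ i = y$i - \<beta> * (\<Sum>j\<in>UNIV. P$i$j * y$j)"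
  for P :: "real^'n::finite^'n"
proof -
  have "(mat 1 - \<beta> *\<^sub>R P) *v y = y - (\<beta> *\<^sub>R P) *v y"
    by (simp add: matrix_vector_mult_diff_rdistrib)
  thus ?thesis by (simp add: matrix_vector_mult_def sum_distrib_left mult.assoc)
qed

lemma minprin:
  fixes P :: "real^'n::finite^'n"
  assumes "stochm P" "0 \<le> \<beta>" "\<beta> < 1" "\<forall>i. 0 \<le> ((mat 1 - \<beta> *\<^sub>R P) *v y)$i"
  shows "\<forall>i. ((mat 1 - \<beta> *\<^sub>R P) *v y)$i \<le> y$i"
proof -
  define m where "m = Min (range (\<lambda>j. y$j))"
  have "m \<in> range (\<lambda>j. y$j)" unfolding m_def by (rule Min_in) auto
  then obtain i0 where i0: "y$i0 = m" by auto
  have mle: "\<And>j. m \<le> y$j" unfolding m_def by (rule Min_le) auto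
  have "(\<Sum>j\<in>UNIV. P$i0$j * m) \<le> (\<Sum>j\<in>UNIV. P$i0$j * y$j)"
    by (rule sum_mono) (use assms(1) mle in \<open>auto simp: stochm_def intro: mult_left_mono\<close>)
  moreover have "(\<Sum>j\<in>UNIV. P$i0$j * m) = m" using assms(1)
    by (simp add: stochm_def sum_distrib_right[symmetric])
  ultimately have "m \<le> (\<Sum>j\<in>UNIV. P$i0$j * y$j)" by simp
  hence "\<beta> * m \<le> \<beta> * (\<Sum>j\<in>UNIV. P$i0$j * y$j)" using assms(2) by (rule mult_left_mono)
  moreover have "0 \<le> y$i0 - \<beta> * (\<Sum>j\<in>UNIV. P$i0$j * y$j)" using assms(4) Mv_eq by metis
  ultimately have "\<beta> * m \<le> m" using i0 by simp
  hence "0 \<le> (1 - \<beta>) * m" by (simp add: algebra_simps)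
  hence m0: "0 \<le> m" using assms(3) by (simp add: zero_le_mult_iff)
  show ?thesis
  proof
    fix i
    have "0 \<le> (\<Sum>j\<in>UNIV. P$i$j * y$j)"
    proof (rule sum_nonneg)
      fix j
      have "0 \<le> y$j" using mle[of j] m0 by linarith
      thus "0 \<le> P$i$j * y$j" using assms(1) by (simp add: stochm_def)
    qed
    thus "((mat 1 - \<beta> *\<^sub>R P) *v y)$i \<le> y$i" using assms(2) by (simp add: Mv_eq)
  qed
qed

lemma inv_ok:
  fixes P :: "real^'n::finite^'n"
  assumes "stochm P" "0 \<le> \<beta>" "\<beta> < 1"
  shows "(mat 1 - \<beta> *\<^sub>R P) *v (matrix_inv (mat 1 - \<beta> *\<^sub>R P) *v r) = r"
proof -
  let ?M = "mat 1 - \<beta> *\<^sub>R P"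
  have inj: "inj ((*v) ?M)"
  proof (rule injI)
    fix x y assume "?M *v x = ?M *v y"
    hence z: "?M *v (x - y) = 0" and z2: "?M *v (y - x) = 0" by (simp_all add: matrix_vector_mult_diff_distrib)
    have a: "\<forall>i. 0 \<le> (x - y)$i" using minprin[OF assms, of "x - y"] z by simp
    have b: "\<forall>i. 0 \<le> (y - x)$i" using minprin[OF assms, of "y - x"] z2 by simp
    show "x = y" using a b by (simp add: vec_eq_iff) (meson antisym)
  qed
  have "invertible ?M"
    using det_nz_iff_inj[of "(*v) ?M"] inj by (simp add: invertible_det_nz)
  then have "\<exists>A'. ?M ** A' = mat 1 \<and> A' ** ?M = mat 1" by (simp add: invertible_def)
  hence "?M ** matrix_inv ?M = mat 1" unfolding matrix_inv_def by (rule someI_ex[THEN conjunct1])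
  thus ?thesis by (metis matrix_vector_mul_assoc matrix_vector_mul_lid)
qed

lemma uniq:
  fixes P :: "real^'n::finite^'n"
  assumes "stochm P" "0 \<le> \<beta>" "\<beta> < 1" "(mat 1 - \<beta> *\<^sub>R P) *v x = (mat 1 - \<beta> *\<^sub>R P) *v y"
  shows "x = y"
proof -
  let ?M = "mat 1 - \<beta> *\<^sub>R P"
  have z: "?M *v (x - y) = 0" and z2: "?M *v (y - x) = 0" using assms(4) by (simp_all add: matrix_vector_mult_diff_distrib)
  have a: "\<forall>i. 0 \<le> (x - y)$i" using minprin[OF assms(1-3), of "x - y"] z by simp
  have b: "\<forall>i. 0 \<le> (y - x)$i" using minprin[OF assms(1-3), of "y - x"] z2 by simp
  show "x = y" using a b by (simp add: vec_eq_iff) (meson antisym)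
qed

lemma pure_sum:
  fixes h F :: "'x \<Rightarrow> real"
  assumes "finite A" "a0 \<in> A" "\<forall>a\<in>A. 0 \<le> h a" "sum h A = 1" "h a0 = 1"
  shows "(\<Sum>a\<in>A. h a * F a) = F a0"
proof -
  have "sum h (A - {a0}) = 0" using assms sum.remove[OF assms(1,2), of h] by linarith
  hence z: "\<forall>a\<in>A - {a0}. h a = 0" using assms by (subst (asm) sum_nonneg_eq_0_iff) auto
  have "(\<Sum>a\<in>A. h a * F a) = h a0 * F a0 + (\<Sum>a\<in>A - {a0}. h a * F a)"
    using assms by (simp add: sum.remove)
  also have "(\<Sum>a\<in>A - {a0}. h a * F a) = 0" using z by simp
  finally show ?thesis using assms by simp
qed

lemma wform:
  fixes q :: "'n::finite \<Rightarrow> real"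
  assumes "\<forall>s. 0 \<le> q s" "(\<Sum>s\<in>UNIV. q s) = 1" "0 \<le> \<beta>" "\<beta> < 1"
  shows "matrix_inv (mat 1 - \<beta> *\<^sub>R (\<chi> t s'. q s')) *v (\<chi> t. rr t)
       = (\<chi> t. rr t + \<beta>/(1-\<beta>) * (\<Sum>s'\<in>UNIV. q s' * rr s'))"
proof -
  define P where "P = ((\<chi> t s'. q s') :: real^'n^'n)"
  define Q where "Q = (\<Sum>s'\<in>UNIV. q s' * rr s')"
  define c where "c = \<beta>/(1-\<beta>)"
  let ?M = "mat 1 - \<beta> *\<^sub>R P"
  have st: "stochm P" using assms by (simp add: stochm_def P_def)
  have K: "(\<Sum>j\<in>UNIV. q j * (rr j + K)) = Q + K" for K
    using assms(2) by (simp add: Q_def distrib_left sum.distrib sum_distrib_right[symmetric])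
  have cb: "c * (1 - \<beta>) = \<beta>" using assms by (simp add: c_def)
  have "?M *v (\<chi> t. rr t + c * Q) = (\<chi> t. rr t)"
  proof (subst vec_eq_iff, rule allI)
    fix i
    have "(?M *v (\<chi> t. rr t + c * Q)) $ i = (rr i + c * Q) - \<beta> * (\<Sum>j\<in>UNIV. P$i$j * (\<chi> t. rr t + c * Q)$j)"
      using Mv_eq[of \<beta> P "\<chi> t. rr t + c * Q" i] by simp
    also have "\<dots> = (rr i + c * Q) - \<beta> * (Q + c * Q)" using K[of "c*Q"] by (simp add: P_def)
    also have "\<dots> = rr i + (c * (1 - \<beta>) - \<beta>) * Q" by (simp add: algebra_simps)
    finally show "(?M *v (\<chi> t. rr t + c * Q)) $ i = (\<chi> t. rr t) $ i" using cb by simp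
  qed
  moreover have "?M *v (matrix_inv ?M *v (\<chi> t. rr t)) = (\<chi> t. rr t)" by (rule inv_ok[OF st assms(3,4)])
  ultimately have "matrix_inv ?M *v (\<chi> t. rr t) = (\<chi> t. rr t + c * Q)" using uniq[OF st assms(3,4)] by metis
  thus ?thesis unfolding P_def c_def Q_def .
qed

lemma stoch_row:
  fixes pp :: "'n::finite \<Rightarrow> 'x \<Rightarrow> 'n \<Rightarrow> real"
  assumes "\<forall>t. finite (A t)" "stationary A h"
    "\<forall>t. \<forall>a\<in>A t. (\<forall>s'. 0 \<le> pp t a s') \<and> (\<Sum>s'\<in>UNIV. pp t a s') = 1"
  shows "stochm (\<chi> t s'. \<Sum>a\<in>A t. h t a * pp t a s')"
  unfolding stochm_def
proof (intro conjI allI)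
  fix i j
  show "0 \<le> (\<chi> t s'. \<Sum>a\<in>A t. h t a * pp t a s') $ i $ j"
    using assms(2,3) by (auto simp: stationary_def intro!: sum_nonneg)
next
  fix i
  have "(\<Sum>j\<in>UNIV. \<Sum>a\<in>A i. h i a * pp i a j) = (\<Sum>a\<in>A i. h i a * (\<Sum>j\<in>UNIV. pp i a j))"
    by (simp add: sum.swap[of _ UNIV] sum_distrib_left)
  also have "\<dots> = (\<Sum>a\<in>A i. h i a)" using assms(3) by simp
  also have "\<dots> = 1" using assms(2) by (simp add: stationary_def)
  finally show "(\<Sum>j\<in>UNIV. (\<chi> t s'. \<Sum>a\<in>A t. h t a * pp t a s') $ i $ j) = 1" by simp
qed

lemma player_ok:
  fixes A :: "'n::finite \<Rightarrow> 'x set" and pp :: "'n \<Rightarrow> 'x \<Rightarrow> 'n \<Rightarrow> real" and rw :: "'n \<Rightarrow> 'x \<Rightarrow> real"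
    and az :: "'n \<Rightarrow> 'x" and q :: "'n \<Rightarrow> real" and hz :: "'n \<Rightarrow> 'x \<Rightarrow> real"
    and V :: "real \<Rightarrow> ('n \<Rightarrow> 'x \<Rightarrow> real) \<Rightarrow> real^'n"
  assumes fin: "\<forall>t. finite (A t)" and az: "\<forall>t. az t \<in> A t"
    and pp: "\<forall>t. \<forall>a\<in>A t. (\<forall>s'. 0 \<le> pp t a s') \<and> (\<Sum>s'\<in>UNIV. pp t a s') = 1"
    and ppq: "\<forall>t s'. pp t (az t) s' = q s'"
    and q: "\<forall>s. 0 \<le> q s" "(\<Sum>s\<in>UNIV. q s) = 1"
    and hz: "stationary A hz" "\<forall>t. hz t (az t) = 1"
    and V: "\<forall>\<beta> h. V \<beta> h = matrix_inv (mat 1 - \<beta> *\<^sub>R (\<chi> t s'. \<Sum>a\<in>A t. h t a * pp t a s'))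
                  *v (\<chi> t. \<Sum>a\<in>A t. h t a * rw t a)"
    and beta: "0 \<le> \<beta>h" "\<beta>h < 1"
    and nash: "\<forall>s h. stationary A h \<longrightarrow> V \<beta>h h $ s \<le> V \<beta>h hz $ s"
    and C3: "\<forall>t. \<forall>a\<in>A t. (\<Sum>s'\<in>UNIV. pp t a s' * rw s' (az s')) \<le> (\<Sum>s'\<in>UNIV. q s' * rw s' (az s'))"
  shows "\<forall>\<beta>\<in>{\<beta>h..<1}. \<forall>s h. stationary A h \<longrightarrow> V \<beta> h $ s \<le> V \<beta> hz $ s"
proof -
  define Pm where "Pm h = (\<chi> t s'. \<Sum>a\<in>A t. h t a * pp t a s')" for h :: "'n \<Rightarrow> 'x \<Rightarrow> real"
  define rv where "rv h = (\<chi> t. \<Sum>a\<in>A t. h t a * rw t a)" for h :: "'n \<Rightarrow> 'x \<Rightarrow> real"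
  define rr where "rr t = rw t (az t)" for t
  define Q where "Q = (\<Sum>s'\<in>UNIV. q s' * rr s')"
  define bd where "bd \<beta> t a = (rw t a - rr t) - \<beta> * (Q - (\<Sum>s'\<in>UNIV. pp t a s' * rr s'))" for \<beta> t a
  have VV: "V \<beta> h = matrix_inv (mat 1 - \<beta> *\<^sub>R Pm h) *v rv h" for \<beta> h
    using V by (simp add: Pm_def rv_def)
  have st: "stochm (Pm h)" if "stationary A h" for h
    unfolding Pm_def by (rule stoch_row[OF fin that pp])
  have pure: "(\<Sum>a\<in>A t. hz t a * F a) = F (az t)" for t and F :: "'x \<Rightarrow> real"
    using hz fin az by (intro pure_sum) (auto simp: stationary_def)
  have Pm0: "Pm hz = (\<chi> t s'. q s')" unfolding Pm_def using pure ppq by simp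
  have rv0: "rv hz = (\<chi> t. rr t)" unfolding rv_def rr_def using pure by simp
  have W: "V \<beta> hz = (\<chi> t. rr t + \<beta>/(1-\<beta>) * Q)" if "0 \<le> \<beta>" "\<beta> < 1" for \<beta>
    unfolding VV Pm0 rv0 Q_def by (rule wform[OF q that])
  have dev: "rv h $ t - ((mat 1 - \<beta> *\<^sub>R Pm h) *v V \<beta> hz) $ t = (\<Sum>a\<in>A t. h t a * bd \<beta> t a)"
    if b: "0 \<le> \<beta>" "\<beta> < 1" and hs: "stationary A h" for \<beta> h t
  proof -
    define c where "c = \<beta>/(1-\<beta>)"
    define w where "w = V \<beta> hz"
    have w: "w$s = rr s + c*Q" for s using W[OF b] by (simp add: w_def c_def)
    have cb: "c * (1 - \<beta>) = \<beta>" using b by (simp add: c_def)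
    have Mw: "((mat 1 - \<beta> *\<^sub>R Pm h) *v w) $ t = w$t - \<beta> * (\<Sum>s'\<in>UNIV. Pm h$t$s' * w$s')"
      by (rule Mv_eq)
    have sw: "(\<Sum>s'\<in>UNIV. Pm h$t$s' * w$s') = (\<Sum>a\<in>A t. h t a * (\<Sum>s'\<in>UNIV. pp t a s' * w$s'))"
      by (simp add: Pm_def sum_distrib_right sum_distrib_left sum.swap[of _ UNIV] mult.assoc)
    have ppw: "(\<Sum>s'\<in>UNIV. pp t a s' * w$s') = (\<Sum>s'\<in>UNIV. pp t a s' * rr s') + c*Q" if "a \<in> A t" for a
    proof -
      have "(\<Sum>s'\<in>UNIV. pp t a s' * w$s') = (\<Sum>s'\<in>UNIV. pp t a s' * rr s' + pp t a s' * (c*Q))"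
        by (simp add: w distrib_left)
      also have "\<dots> = (\<Sum>s'\<in>UNIV. pp t a s' * rr s') + (\<Sum>s'\<in>UNIV. pp t a s') * (c*Q)"
        by (simp add: sum.distrib sum_distrib_right)
      finally show ?thesis using pp that by simp
    qed
    have hsum: "sum (h t) (A t) = 1" using hs by (simp add: stationary_def)
    have "rv h $ t - ((mat 1 - \<beta> *\<^sub>R Pm h) *v w) $ t
        = (\<Sum>a\<in>A t. h t a * rw t a) - (\<Sum>a\<in>A t. h t a) * w$t + \<beta> * (\<Sum>a\<in>A t. h t a * (\<Sum>s'\<in>UNIV. pp t a s' * w$s'))"
      unfolding Mw sw hsum by (simp add: rv_def)
    also have "\<dots> = (\<Sum>a\<in>A t. h t a * (rw t a - w$t + \<beta> * (\<Sum>s'\<in>UNIV. pp t a s' * w$s')))"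
      by (simp add: sum_distrib_right sum_distrib_left algebra_simps sum.distrib sum_subtractf)
    also have "\<dots> = (\<Sum>a\<in>A t. h t a * bd \<beta> t a)"
    proof (rule sum.cong[OF refl])
      fix a assume a: "a \<in> A t"
      have "rw t a - w$t + \<beta> * (\<Sum>s'\<in>UNIV. pp t a s' * w$s')
          = (rw t a - rr t) - \<beta> * (Q - (\<Sum>s'\<in>UNIV. pp t a s' * rr s')) + (\<beta> - c * (1 - \<beta>)) * Q"
      proof -
        have "rw t a - w$t + \<beta> * (\<Sum>s'\<in>UNIV. pp t a s' * w$s')
           = rw t a - (rr t + c*Q) + \<beta> * ((\<Sum>s'\<in>UNIV. pp t a s' * rr s') + c*Q)"
          using ppw[OF a] w[of t] by simp
        thus ?thesis by (simp add: algebra_simps)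
      qed
      also have "\<dots> = bd \<beta> t a" using cb by (simp add: bd_def)
      finally show "h t a * (rw t a - w$t + \<beta> * (\<Sum>s'\<in>UNIV. pp t a s' * w$s')) = h t a * bd \<beta> t a"
        by simp
    qed
    finally show ?thesis by (simp add: w_def)
  qed
  have bd0: "bd \<beta> t (az t) = 0" for \<beta> t by (simp add: bd_def rr_def Q_def ppq)
  have step1: "\<forall>t. \<forall>a\<in>A t. bd \<beta>h t a \<le> 0"
  proof (rule ccontr)
    assume "\<not> ?thesis"
    then obtain t a where a: "a \<in> A t" and pos: "bd \<beta>h t a > 0" by force
    define h where "h = hz(t := (\<lambda>b. if b = a then 1 else 0))"
    have hs: "stationary A h"
      using hz(1) fin a unfolding stationary_def h_def by auto
    let ?M = "mat 1 - \<beta>h *\<^sub>R Pm h"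
    define y where "y = V \<beta>h h - V \<beta>h hz"
    have Mv: "?M *v V \<beta>h h = rv h" unfolding VV by (rule inv_ok[OF st[OF hs] beta])
    have My: "(?M *v y) $ t' = (\<Sum>b\<in>A t'. h t' b * bd \<beta>h t' b)" for t'
      using dev[OF beta hs, of t'] Mv unfolding y_def by (simp add: matrix_vector_mult_diff_distrib)
    have My2: "(?M *v y) $ t' = (if t' = t then bd \<beta>h t a else 0)" for t'
    proof (cases "t' = t")
      case True
      then show ?thesis using My[of t'] fin a pure_sum[of "A t" a "\<lambda>b. if b = a then 1 else 0" "bd \<beta>h t"] by (simp add: h_def)
    next
      case False
      then show ?thesis using My[of t'] pure[of t' "bd \<beta>h t'"] bd0 by (simp add: h_def)
    qed
    have "\<forall>i. 0 \<le> (?M *v y) $ i" using My2 pos by simp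
    from minprin[OF st[OF hs] beta this] have "(?M *v y) $ t \<le> y $ t" by blast
    hence "0 < y $ t" using My2[of t] pos by simp
    hence "V \<beta>h hz $ t < V \<beta>h h $ t" by (simp add: y_def)
    thus False using nash hs by (meson not_le)
  qed
  show ?thesis
  proof (intro ballI allI impI)
    fix \<beta> s h assume b: "\<beta> \<in> {\<beta>h..<1}" and hs: "stationary A h"
    have b0: "0 \<le> \<beta>" "\<beta> < 1" using b beta by auto
    have bdn: "bd \<beta> t a \<le> 0" if "a \<in> A t" for t a
    proof -
      have D: "0 \<le> Q - (\<Sum>s'\<in>UNIV. pp t a s' * rr s')" using C3 that by (simp add: Q_def rr_def)
      have "\<beta>h * (Q - (\<Sum>s'\<in>UNIV. pp t a s' * rr s')) \<le> \<beta> * (Q - (\<Sum>s'\<in>UNIV. pp t a s' * rr s'))"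
        using b D by (intro mult_right_mono) auto
      thus ?thesis using step1 that by (force simp: bd_def)
    qed
    let ?M = "mat 1 - \<beta> *\<^sub>R Pm h"
    define y where "y = V \<beta> hz - V \<beta> h"
    have Mv: "?M *v V \<beta> h = rv h" unfolding VV by (rule inv_ok[OF st[OF hs] b0])
    have My: "(?M *v y) $ t' = - (\<Sum>b\<in>A t'. h t' b * bd \<beta> t' b)" for t'
      using dev[OF b0 hs, of t'] Mv unfolding y_def by (simp add: matrix_vector_mult_diff_distrib)
    have "\<forall>i. 0 \<le> (?M *v y) $ i"
    proof
      fix i
      have "(\<Sum>b\<in>A i. h i b * bd \<beta> i b) \<le> 0"
        using hs bdn by (intro sum_nonpos) (auto simp: stationary_def mult_nonneg_nonpos)
      thus "0 \<le> (?M *v y) $ i" using My by simp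
    qed
    with minprin[OF st[OF hs] b0 this] have "0 \<le> y $ s" by (meson order_trans)
    thus "V \<beta> h $ s \<le> V \<beta> hz $ s" by (simp add: y_def)
  qed
qed

theorem theorem2:
  fixes A1 :: "'s::finite \<Rightarrow> 'a set" and A2 :: "'s \<Rightarrow> 'b set"
    and p :: "'s \<Rightarrow> 'a \<Rightarrow> 'b \<Rightarrow> 's \<Rightarrow> real"
    and r1 r2 :: "'s \<Rightarrow> 'a \<Rightarrow> 'b \<Rightarrow> real"
    and f :: "'s \<Rightarrow> 'a \<Rightarrow> real" and g :: "'s \<Rightarrow> 'b \<Rightarrow> real"
    and \<beta>h :: real
    and as1 :: "'s \<Rightarrow> 'a" and as2 :: "'s \<Rightarrow> 'b"
    and q :: "'s \<Rightarrow> real"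
  assumes game: "stoch_game A1 A2 p"
    and f_stat: "stationary A1 f" and g_stat: "stationary A2 g"
    and beta: "0 \<le> \<beta>h" "\<beta>h < 1"
    and nash: "disc_nash \<beta>h A1 A2 p r1 r2 f g"
    and C1: "\<forall>s. as1 s \<in> A1 s \<and> as2 s \<in> A2 s \<and> f s (as1 s) = 1 \<and> g s (as2 s) = 1"
    and C2: "\<forall>s. 0 \<le> q s" "(\<Sum>s\<in>UNIV. q s) = 1"
      "\<forall>s s'. trans_mat A1 A2 p f g $ s $ s' = q s'"
    and C3a: "\<forall>s. \<forall>a1\<in>A1 s.
        (\<Sum>s'\<in>UNIV. p s a1 (as2 s) s' * r1 s' (as1 s') (as2 s'))
          \<le> (\<Sum>s'\<in>UNIV. q s' * r1 s' (as1 s') (as2 s'))"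
    and C3b: "\<forall>s. \<forall>a2\<in>A2 s.
        (\<Sum>s'\<in>UNIV. p s (as1 s) a2 s' * r2 s' (as1 s') (as2 s'))
          \<le> (\<Sum>s'\<in>UNIV. q s' * r2 s' (as1 s') (as2 s'))"
  shows "blackwell_nash A1 A2 p r1 r2 f g"
proof -
  have fin1: "\<forall>t. finite (A1 t)" and fin2: "\<forall>t. finite (A2 t)" using game by (auto simp: stoch_game_def)
  have pr: "\<And>t a1 a2. a1 \<in> A1 t \<Longrightarrow> a2 \<in> A2 t \<Longrightarrow> (\<forall>s'. 0 \<le> p t a1 a2 s') \<and> (\<Sum>s'\<in>UNIV. p t a1 a2 s') = 1"
    using game by (auto simp: stoch_game_def)
  have F: "(\<Sum>a\<in>A1 t. f t a * H a) = H (as1 t)" for t and H :: "'a \<Rightarrow> real"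
    using f_stat fin1 C1 by (intro pure_sum) (auto simp: stationary_def)
  have G: "(\<Sum>a\<in>A2 t. g t a * H a) = H (as2 t)" for t and H :: "'b \<Rightarrow> real"
    using g_stat fin2 C1 by (intro pure_sum) (auto simp: stationary_def)
  have G': "(\<Sum>a\<in>A2 t. c * g t a * H a) = c * H (as2 t)" for t c and H :: "'b \<Rightarrow> real"
    using G[of t H] by (simp add: mult.assoc sum_distrib_left[symmetric])
  have F': "(\<Sum>a1\<in>A1 t. \<Sum>a2\<in>A2 t. f t a1 * c a2 * H a1 a2) = (\<Sum>a2\<in>A2 t. c a2 * H (as1 t) a2)"
    for t and c :: "'b \<Rightarrow> real" and H :: "'a \<Rightarrow> 'b \<Rightarrow> real"
    using F[of t "\<lambda>a1. \<Sum>a2\<in>A2 t. c a2 * H a1 a2"] by (simp add: mult.assoc sum_distrib_left)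
  have TM1: "trans_mat A1 A2 p f' g = (\<chi> t s'. \<Sum>a\<in>A1 t. f' t a * p t a (as2 t) s')" for f'
    unfolding trans_mat_def by (simp add: G')
  have RV1: "rew_vec A1 A2 r f' g = (\<chi> t. \<Sum>a\<in>A1 t. f' t a * r t a (as2 t))" for f' r
    unfolding rew_vec_def by (simp add: G')
  have TM2: "trans_mat A1 A2 p f g' = (\<chi> t s'. \<Sum>a\<in>A2 t. g' t a * p t (as1 t) a s')" for g'
    unfolding trans_mat_def by (simp add: F')
  have RV2: "rew_vec A1 A2 r f g' = (\<chi> t. \<Sum>a\<in>A2 t. g' t a * r t (as1 t) a)" for g' r
    unfolding rew_vec_def by (simp add: F')
  have ppq: "\<forall>t s'. p t (as1 t) (as2 t) s' = q s'"
    using C2(3) by (simp add: TM1 F)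
  have P1: "\<forall>\<beta>\<in>{\<beta>h..<1}. \<forall>s h. stationary A1 h \<longrightarrow>
      disc_payoff \<beta> A1 A2 p r1 h g $ s \<le> disc_payoff \<beta> A1 A2 p r1 f g $ s"
  proof (rule player_ok[where A = A1 and pp = "\<lambda>t a s'. p t a (as2 t) s'" and rw = "\<lambda>t a. r1 t a (as2 t)"
        and az = as1 and q = q and hz = f and V = "\<lambda>\<beta> h. disc_payoff \<beta> A1 A2 p r1 h g"])
    show "\<forall>t. finite (A1 t)" by (rule fin1)
    show "\<forall>t. as1 t \<in> A1 t" using C1 by simp
    show "\<forall>t. \<forall>a\<in>A1 t. (\<forall>s'. 0 \<le> p t a (as2 t) s') \<and> (\<Sum>s'\<in>UNIV. p t a (as2 t) s') = 1"
      using pr C1 by blast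
    show "\<forall>t s'. p t (as1 t) (as2 t) s' = q s'" by (rule ppq)
    show "\<forall>s. 0 \<le> q s" "(\<Sum>s\<in>UNIV. q s) = 1" using C2 by auto
    show "stationary A1 f" "\<forall>t. f t (as1 t) = 1" using f_stat C1 by auto
    show "\<forall>\<beta> h. disc_payoff \<beta> A1 A2 p r1 h g = matrix_inv (mat 1 - \<beta> *\<^sub>R (\<chi> t s'. \<Sum>a\<in>A1 t. h t a * p t a (as2 t) s'))
                  *v (\<chi> t. \<Sum>a\<in>A1 t. h t a * r1 t a (as2 t))"
      by (simp add: disc_payoff_def TM1 RV1)
    show "0 \<le> \<beta>h" "\<beta>h < 1" by (rule beta)+
    show "\<forall>s h. stationary A1 h \<longrightarrow> disc_payoff \<beta>h A1 A2 p r1 h g $ s \<le> disc_payoff \<beta>h A1 A2 p r1 f g $ s"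
      using nash by (simp add: disc_nash_def)
    show "\<forall>t. \<forall>a\<in>A1 t. (\<Sum>s'\<in>UNIV. p t a (as2 t) s' * r1 s' (as1 s') (as2 s')) \<le> (\<Sum>s'\<in>UNIV. q s' * r1 s' (as1 s') (as2 s'))"
      by (rule C3a)
  qed
  have P2: "\<forall>\<beta>\<in>{\<beta>h..<1}. \<forall>s h. stationary A2 h \<longrightarrow>
      disc_payoff \<beta> A1 A2 p r2 f h $ s \<le> disc_payoff \<beta> A1 A2 p r2 f g $ s"
  proof (rule player_ok[where A = A2 and pp = "\<lambda>t a s'. p t (as1 t) a s'" and rw = "\<lambda>t a. r2 t (as1 t) a"
        and az = as2 and q = q and hz = g and V = "\<lambda>\<beta> h. disc_payoff \<beta> A1 A2 p r2 f h"])
    show "\<forall>t. finite (A2 t)" by (rule fin2)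
    show "\<forall>t. as2 t \<in> A2 t" using C1 by simp
    show "\<forall>t. \<forall>a\<in>A2 t. (\<forall>s'. 0 \<le> p t (as1 t) a s') \<and> (\<Sum>s'\<in>UNIV. p t (as1 t) a s') = 1"
      using pr C1 by blast
    show "\<forall>t s'. p t (as1 t) (as2 t) s' = q s'" by (rule ppq)
    show "\<forall>s. 0 \<le> q s" "(\<Sum>s\<in>UNIV. q s) = 1" using C2 by auto
    show "stationary A2 g" "\<forall>t. g t (as2 t) = 1" using g_stat C1 by auto
    show "\<forall>\<beta> h. disc_payoff \<beta> A1 A2 p r2 f h = matrix_inv (mat 1 - \<beta> *\<^sub>R (\<chi> t s'. \<Sum>a\<in>A2 t. h t a * p t (as1 t) a s'))
                  *v (\<chi> t. \<Sum>a\<in>A2 t. h t a * r2 t (as1 t) a)"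
      by (simp add: disc_payoff_def TM2 RV2)
    show "0 \<le> \<beta>h" "\<beta>h < 1" by (rule beta)+
    show "\<forall>s h. stationary A2 h \<longrightarrow> disc_payoff \<beta>h A1 A2 p r2 f h $ s \<le> disc_payoff \<beta>h A1 A2 p r2 f g $ s"
      using nash by (simp add: disc_nash_def)
    show "\<forall>t. \<forall>a\<in>A2 t. (\<Sum>s'\<in>UNIV. p t (as1 t) a s' * r2 s' (as1 s') (as2 s')) \<le> (\<Sum>s'\<in>UNIV. q s' * r2 s' (as1 s') (as2 s'))"
      by (rule C3b)
  qed
  show ?thesis unfolding blackwell_nash_def disc_nash_def
  proof (rule bexI[of _ \<beta>h])
    show "\<beta>h \<in> {0..<1}" using beta by simp
    show "\<forall>\<beta>\<in>{\<beta>h..<1}. \<forall>s. (\<forall>f'. stationary A1 f' \<longrightarrow>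
              disc_payoff \<beta> A1 A2 p r1 f' g $ s \<le> disc_payoff \<beta> A1 A2 p r1 f g $ s) \<and>
          (\<forall>g'. stationary A2 g' \<longrightarrow>
              disc_payoff \<beta> A1 A2 p r2 f g' $ s \<le> disc_payoff \<beta> A1 A2 p r2 f g $ s)"
      using P1 P2 by blast
  qed
qed

end
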